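(* Let $X,Y$ be compact topological spaces, $\mu\in\mathcal{P}(X)$, $\nu\in\mathcal{P}(Y)$, $c\in C(X\times Y)$. For every $u_0\in C(X)$, the sequence $u_m:=S^m(u_0)$ converges uniformly on $X$ to a fixed point $u_\infty$ of $S$.
   Context: For $u\in C(X)$ set $v[u](y)=\log\int_Xe^{-c(x,y)-u(x)}d\mu(x)$, and for $v\in C(Y)$ set $u[v](x)=\log\int_Ye^{-c(x,y)-v(y)}d\nu(y)$. $S:C(X)\to C(X)$ is $S(u)=u[v[u]]$ (an infinite-dimensional form of the Sinkhorn / iterative proportional fitting iteration). *)

theory Defs
  imports "HOL-Probability.Probability"
begin

text \<open>The Schroedinger/Sinkhorn potentials.  X and Y are modelled as the (compact)
  topological spaces underlying the types 'a and 'b; C(X) is the set of continuous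
  real functions on UNIV.\<close>

definition v_of :: "('a \<times> 'b \<Rightarrow> real) \<Rightarrow> 'a measure \<Rightarrow> ('a \<Rightarrow> real) \<Rightarrow> 'b \<Rightarrow> real" where
  "v_of c \<mu> u = (\<lambda>y. ln (\<integral>x. exp (- c (x, y) - u x) \<partial>\<mu>))"

definition u_of :: "('a \<times> 'b \<Rightarrow> real) \<Rightarrow> 'b measure \<Rightarrow> ('b \<Rightarrow> real) \<Rightarrow> 'a \<Rightarrow> real" where
  "u_of c \<nu> v = (\<lambda>x. ln (\<integral>y. exp (- c (x, y) - v y) \<partial>\<nu>))"

definition sinkhorn_S :: "('a \<times> 'b \<Rightarrow> real) \<Rightarrow> 'a measure \<Rightarrow> 'b measure \<Rightarrow> ('a \<Rightarrow> real) \<Rightarrow> 'a \<Rightarrow> real" where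
  "sinkhorn_S c \<mu> \<nu> u = u_of c \<nu> (v_of c \<mu> u)"

end

theory Submission
  imports Defs
begin

lemma real_contr:
  fixes gm M k r :: real
  assumes "gm > 0" "0 < k" "k \<le> 1" "gm \<le> M" "M \<le> gm * exp r"
  shows "ln M - ln (k * M + (1 - k) * gm) \<le> (1 - k) * r"
proof -
  define t where "t = M / gm"
  have t1: "1 \<le> t" using assms unfolding t_def by (simp add: field_simps)
  have t2: "t \<le> exp r" using assms unfolding t_def by (simp add: field_simps)
  define s where "s = ln t"
  have s0: "0 \<le> s" using t1 unfolding s_def by simp
  have sr: "s \<le> r" using t1 t2 unfolding s_def
    using ln_mono[OF t2] t1 by simp
  have ts: "t = exp s" using t1 unfolding s_def by simp
  have cv: "exp ((1 - k) *\<^sub>R 0 + k *\<^sub>R s) \<le> (1 - k) * exp 0 + k * exp s"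
    using convex_onD[OF exp_convex, of k 0 s] assms by simp
  hence e1: "exp (k * s) \<le> k * t + (1 - k)" using ts by simp
  have kt: "k \<le> k * t" using mult_left_mono[of 1 t k] t1 assms(2) by simp
  have p1: "k * t + (1 - k) > 0" using kt by simp
  have ks: "k * s \<le> ln (k * t + (1 - k))"
    using e1 p1 by (subst ln_exp[symmetric]) (rule ln_mono, simp_all)
  have M: "M = gm * t" using assms unfolding t_def by simp
  have "ln M - ln (k * M + (1 - k) * gm) = ln t - ln (k * t + (1 - k))"
  proof -
    have "k * M + (1 - k) * gm = gm * (k * t + (1 - k))" using M by (simp add: algebra_simps)
    moreover have "ln (gm * t) = ln gm + ln t" using assms t1 by (simp add: ln_mult)
    moreover have "ln (gm * (k * t + (1 - k))) = ln gm + ln (k * t + (1 - k))"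
      using assms p1 by (simp add: ln_mult)
    ultimately show ?thesis using M by simp
  qed
  also have "\<dots> \<le> s - k * s" using ks s_def by simp
  also have "\<dots> \<le> (1 - k) * r" using s0 sr assms
    using mult_left_mono[OF sr, of "1 - k"] by (simp add: algebra_simps)
  finally show ?thesis .
qed

definition lse :: "'a measure \<Rightarrow> ('a \<Rightarrow> real) \<Rightarrow> real" where
  "lse M f = ln (\<integral>x. exp (f x) \<partial>M)"

context prob_space
begin

lemma L_int:
  fixes f :: "'a \<Rightarrow> real"
  assumes "f \<in> borel_measurable M" "\<And>x. \<bar>f x\<bar> \<le> B"
  shows "integrable M (\<lambda>x. exp (f x))"
  apply (rule integrable_const_bound[where B="exp B"])
  using assms by (auto intro!: AE_I2 simp: abs_le_iff)

lemma L_pos: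
  fixes f :: "'a \<Rightarrow> real"
  assumes "f \<in> borel_measurable M" "\<And>x. \<bar>f x\<bar> \<le> B"
  shows "exp (- B) \<le> (\<integral>x. exp (f x) \<partial>M)"
proof -
  have "(\<integral>x. exp (- B) \<partial>M) \<le> (\<integral>x. exp (f x) \<partial>M)"
    apply (rule integral_mono[OF _ L_int[OF assms]])
     apply simp
    subgoal for x using assms(2)[of x] by (simp add: abs_le_iff)
    done
  thus ?thesis by (simp add: prob_space)
qed

lemma lse_le:
  fixes f g :: "'a \<Rightarrow> real"
  assumes "f \<in> borel_measurable M" "\<And>x. \<bar>f x\<bar> \<le> B"
    "g \<in> borel_measurable M" "\<And>x. \<bar>g x\<bar> \<le> B'"
    "\<And>x. f x \<le> g x + e"
  shows "lse M f \<le> lse M g + e"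
proof -
  have pf: "(\<integral>x. exp (f x) \<partial>M) > 0" using L_pos[OF assms(1,2)]
    by (meson exp_gt_zero order_less_le_trans)
  have pg: "(\<integral>x. exp (g x) \<partial>M) > 0" using L_pos[OF assms(3,4)]
    by (meson exp_gt_zero order_less_le_trans)
  have "(\<integral>x. exp (f x) \<partial>M) \<le> (\<integral>x. exp e * exp (g x) \<partial>M)"
    apply (rule integral_mono[OF L_int[OF assms(1,2)]])
    using L_int[OF assms(3,4)] apply simp
  proof -
    fix x
    have "exp (f x) \<le> exp (g x + e)" using assms(5)[of x] by simp
    thus "exp (f x) \<le> exp e * exp (g x)" by (simp add: exp_add mult.commute)
  qed
  also have "\<dots> = exp e * (\<integral>x. exp (g x) \<partial>M)" by simp
  finally have "ln (\<integral>x. exp (f x) \<partial>M) \<le> ln (exp e * (\<integral>x. exp (g x) \<partial>M))"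
    using pf by simp
  also have "\<dots> = e + ln (\<integral>x. exp (g x) \<partial>M)" using pg by (simp add: ln_mult)
  finally show ?thesis unfolding lse_def by simp
qed


lemma contr:
  fixes f1 f2 w :: "'a \<Rightarrow> real"
  assumes m1: "f1 \<in> borel_measurable M" and b1: "\<And>x. \<bar>f1 x\<bar> \<le> B1"
    and m2: "f2 \<in> borel_measurable M" and b2: "\<And>x. \<bar>f2 x\<bar> \<le> B2"
    and mw: "w \<in> borel_measurable M" and bw: "\<And>x. \<bar>w x\<bar> \<le> Bw"
    and D: "\<And>x. \<bar>f1 x - f2 x\<bar> \<le> D"
    and wr: "\<And>x. \<alpha> \<le> w x \<and> w x \<le> \<alpha> + r"
  shows "(lse M (\<lambda>x. f1 x - w x) - lse M f1) - (lse M (\<lambda>x. f2 x - w x) - lse M f2)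
           \<le> (1 - exp (- 2 * D)) * r"
proof -
  define gm where "gm = exp (- \<alpha> - r)"
  define k where "k = exp (- D)"
  have gm0: "gm > 0" and k0: "k > 0" unfolding gm_def k_def by auto
  have D0: "D \<ge> 0" using D[of undefined] by simp
  have k1: "k \<le> 1" unfolding k_def using D0 by simp
  have m1w: "(\<lambda>x. f1 x - w x) \<in> borel_measurable M" using m1 mw by measurable
  have m2w: "(\<lambda>x. f2 x - w x) \<in> borel_measurable M" using m2 mw by measurable
  have b1w: "\<bar>f1 x - w x\<bar> \<le> B1 + Bw" for x using b1[of x] bw[of x] by arith
  have b2w: "\<bar>f2 x - w x\<bar> \<le> B2 + Bw" for x using b2[of x] bw[of x] by arith
  note I1 = L_int[OF m1 b1] and I2 = L_int[OF m2 b2]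
    and I1w = L_int[OF m1w b1w] and I2w = L_int[OF m2w b2w]
  define Z1 where "Z1 = (\<integral>x. exp (f1 x) \<partial>M)"
  define Z2 where "Z2 = (\<integral>x. exp (f2 x) \<partial>M)"
  define A1 where "A1 = (\<integral>x. exp (f1 x - w x) \<partial>M)"
  define A2 where "A2 = (\<integral>x. exp (f2 x - w x) \<partial>M)"
  have Z1p: "Z1 > 0" unfolding Z1_def using L_pos[OF m1 b1]
    by (meson exp_gt_zero order_less_le_trans)
  have Z2p: "Z2 > 0" unfolding Z2_def using L_pos[OF m2 b2]
    by (meson exp_gt_zero order_less_le_trans)
  have A1p: "A1 > 0" unfolding A1_def using L_pos[OF m1w b1w]
    by (meson exp_gt_zero order_less_le_trans)
  have A2p: "A2 > 0" unfolding A2_def using L_pos[OF m2w b2w]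
    by (meson exp_gt_zero order_less_le_trans)
  have ew: "gm \<le> exp (- w x)" "exp (- w x) \<le> gm * exp r" for x
  proof -
    show "gm \<le> exp (- w x)" unfolding gm_def using wr[of x] by simp
    have "exp (- w x) \<le> exp (- \<alpha>)" using wr[of x] by simp
    also have "exp (- \<alpha>) = gm * exp r" unfolding gm_def by (simp flip: exp_add)
    finally show "exp (- w x) \<le> gm * exp r" .
  qed
  have split1: "exp (f1 x - w x) = exp (f1 x) * exp (- w x)" for x by (simp flip: exp_add)
  have split2: "exp (f2 x - w x) = exp (f2 x) * exp (- w x)" for x by (simp flip: exp_add)
  have a1: "gm * Z1 \<le> A1"
  proof -
    have "(\<integral>x. gm * exp (f1 x) \<partial>M) \<le> A1" unfolding A1_def
      apply (rule integral_mono)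
      using I1 apply simp
      using I1w apply simp
      using ew(1) by (simp add: split1 mult.commute)
    thus ?thesis unfolding Z1_def by simp
  qed
  have a2: "A1 \<le> gm * exp r * Z1"
  proof -
    have "A1 \<le> (\<integral>x. gm * exp r * exp (f1 x) \<partial>M)" unfolding A1_def
      apply (rule integral_mono)
      using I1w apply simp
      using I1 apply simp
      using ew(2) by (simp add: split1 mult.commute)
    thus ?thesis unfolding Z1_def by simp
  qed
  have ef: "k * exp (f1 x) \<le> exp (f2 x)" "k * exp (f2 x) \<le> exp (f1 x)" for x
    unfolding k_def using D[of x] by (simp_all flip: exp_add add: abs_le_iff)
  have bb: "k * (A1 - gm * Z1) \<le> A2 - gm * Z2"
  proof -
    have "(\<integral>x. k * (exp (f1 x - w x) - gm * exp (f1 x)) \<partial>M)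
          \<le> (\<integral>x. exp (f2 x - w x) - gm * exp (f2 x) \<partial>M)"
    proof (rule integral_mono)
      show "integrable M (\<lambda>x. k * (exp (f1 x - w x) - gm * exp (f1 x)))"
        using I1 I1w by simp
      show "integrable M (\<lambda>x. exp (f2 x - w x) - gm * exp (f2 x))"
        using I2 I2w by simp
      fix x
      have "k * (exp (f1 x - w x) - gm * exp (f1 x)) = (k * exp (f1 x)) * (exp (- w x) - gm)"
        by (simp add: split1 algebra_simps)
      also have "\<dots> \<le> exp (f2 x) * (exp (- w x) - gm)"
        using ef(1)[of x] ew(1)[of x] by (simp add: mult_right_mono)
      also have "\<dots> = exp (f2 x - w x) - gm * exp (f2 x)"
        by (simp add: split2 algebra_simps)
      finally show "k * (exp (f1 x - w x) - gm * exp (f1 x)) \<le> exp (f2 x - w x) - gm * exp (f2 x)" .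
    qed
    moreover have "(\<integral>x. k * (exp (f1 x - w x) - gm * exp (f1 x)) \<partial>M) = k * (A1 - gm * Z1)"
      unfolding A1_def Z1_def using I1 I1w by simp
    moreover have "(\<integral>x. exp (f2 x - w x) - gm * exp (f2 x) \<partial>M) = A2 - gm * Z2"
      unfolding A2_def Z2_def using I2 I2w by simp
    ultimately show ?thesis using k0 by auto
  qed
  have cz: "k * Z2 \<le> Z1"
  proof -
    have "(\<integral>x. k * exp (f2 x) \<partial>M) \<le> Z1" unfolding Z1_def
      apply (rule integral_mono) using I1 I2 ef(2) by auto
    thus ?thesis unfolding Z2_def by simp
  qed
  define Mm where "Mm = A1 / Z1"
  define m where "m = A2 / Z2"
  have Mm1: "gm \<le> Mm" using a1 Z1p unfolding Mm_def by (simp add: field_simps)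
  have Mm2: "Mm \<le> gm * exp r" using a2 Z1p unfolding Mm_def by (simp add: field_simps)
  have "m - gm = (A2 - gm * Z2) / Z2" unfolding m_def using Z2p by (simp add: field_simps)
  also have "\<dots> \<ge> k * (A1 - gm * Z1) / Z2" using bb Z2p by (simp add: divide_right_mono)
  finally have s1: "m - gm \<ge> k * (A1 - gm * Z1) / Z2" .
  have "k * (A1 - gm * Z1) / Z2 = k * (Z1 / Z2) * (Mm - gm)"
    unfolding Mm_def using Z1p Z2p by (simp add: field_simps)
  also have "\<dots> \<ge> k * k * (Mm - gm)"
  proof -
    have "k \<le> Z1 / Z2" using cz Z2p by (simp add: field_simps)
    thus ?thesis using Mm1 k0 by (intro mult_right_mono mult_left_mono) auto
  qed
  finally have s2: "m \<ge> (k * k) * Mm + (1 - k * k) * gm" using s1 by (simp add: algebra_simps)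
  have kk: "k * k = exp (- 2 * D)" unfolding k_def by (simp flip: exp_add)
  have kk0: "0 < k * k" "k * k \<le> 1" using k0 k1 by (auto simp: mult_le_one)
  have pos: "(k * k) * Mm + (1 - k * k) * gm > 0"
    using kk0 gm0 Mm1 by (smt (verit) mult_nonneg_nonneg mult_pos_pos)
  have "lse M (\<lambda>x. f1 x - w x) - lse M f1 = ln Mm"
    unfolding lse_def Mm_def A1_def[symmetric] Z1_def[symmetric] using A1p Z1p by (simp add: ln_div)
  moreover have "lse M (\<lambda>x. f2 x - w x) - lse M f2 = ln m"
    unfolding lse_def m_def A2_def[symmetric] Z2_def[symmetric] using A2p Z2p by (simp add: ln_div)
  moreover have "ln m \<ge> ln ((k * k) * Mm + (1 - k * k) * gm)"
    using s2 pos by (simp add: ln_mono)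
  moreover have "ln Mm - ln ((k * k) * Mm + (1 - k * k) * gm) \<le> (1 - k * k) * r"
    by (rule real_contr[OF gm0 kk0 Mm1 Mm2])
  ultimately show ?thesis using kk by simp
qed

end

lemma cont_bnd:
  fixes f :: "'x::topological_space \<Rightarrow> real"
  assumes "compact (UNIV::'x set)" "continuous_on UNIV f"
  shows "\<exists>B. \<forall>x. \<bar>f x\<bar> \<le> B"
proof -
  have "compact (f ` UNIV)" using compact_continuous_image assms by blast
  hence "bounded (f ` UNIV)" by (rule compact_imp_bounded)
  thus ?thesis unfolding bounded_real by auto
qed

lemma osc_int:
  fixes d :: "'x \<Rightarrow> real"
  assumes "\<And>x x'. d x - d x' \<le> r"
  shows "\<exists>\<alpha>. \<forall>x. \<alpha> \<le> d x \<and> d x \<le> \<alpha> + r"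
proof (intro exI allI conjI)
  have lb: "d undefined - r \<le> d x" for x using assms[of undefined x] by simp
  have bb: "bdd_below (range d)"
    by (rule bdd_belowI[where m="d undefined - r"]) (use lb in auto)
  fix x
  show "Inf (range d) \<le> d x" by (rule cInf_lower[OF _ bb]) simp
  have "d x - r \<le> Inf (range d)"
    apply (rule cInf_greatest) apply simp apply clarsimp
    subgoal for x' using assms[of x x'] by simp done
  thus "d x \<le> Inf (range d) + r" by simp
qed

locale sk =
  fixes c :: "'a::topological_space \<times> 'b::topological_space \<Rightarrow> real" and M :: "'a measure"
  assumes cA: "compact (UNIV::'a set)" and cB: "compact (UNIV::'b set)"
    and P: "prob_space M" and SM: "sets M = sets borel" and cc: "continuous_on UNIV c"
begin

interpretation p: prob_space M by (rule P)

lemma cbnd: "\<exists>B\<ge>0. \<forall>p. \<bar>c p\<bar> \<le> B"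
proof -
  have "compact (UNIV::('a\<times>'b) set)" using compact_Times[OF cA cB] by simp
  then obtain B where "\<forall>p. \<bar>c p\<bar> \<le> B" using cont_bnd cc by blast
  thus ?thesis by (intro exI[of _ "max B 0"]) (auto intro: order_trans[OF _ max.cobounded1])
qed

lemma cont_sec: "continuous_on UNIV (\<lambda>x. c (x, y))"
  by (rule continuous_on_compose2[OF cc]) (auto intro!: continuous_intros)

lemma fy:
  assumes "continuous_on UNIV u"
  shows "continuous_on UNIV (\<lambda>x. - c (x, y) - u x)"
    and "(\<lambda>x. - c (x, y) - u x) \<in> borel_measurable M"
    and "\<exists>B. \<forall>x. \<bar>- c (x, y) - u x\<bar> \<le> B"
proof -
  show c1: "continuous_on UNIV (\<lambda>x. - c (x, y) - u x)"
    using cont_sec assms by (intro continuous_intros)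
  show "(\<lambda>x. - c (x, y) - u x) \<in> borel_measurable M"
    unfolding measurable_cong_sets[OF SM refl] by (rule borel_measurable_continuous_onI[OF c1])
  show "\<exists>B. \<forall>x. \<bar>- c (x, y) - u x\<bar> \<le> B" using cont_bnd[OF cA c1] .
qed

lemma v_eq: "v_of c M u = (\<lambda>y. lse M (\<lambda>x. - c (x, y) - u x))"
  unfolding v_of_def lse_def by simp

lemma T_nonexp:
  assumes "continuous_on UNIV u" "continuous_on UNIV u'" "\<And>x. \<bar>u x - u' x\<bar> \<le> e"
  shows "\<bar>v_of c M u y - v_of c M u' y\<bar> \<le> e"
proof -
  obtain B where B: "\<forall>x. \<bar>- c (x, y) - u x\<bar> \<le> B" using fy(3)[OF assms(1)] by blast
  obtain B' where B': "\<forall>x. \<bar>- c (x, y) - u' x\<bar> \<le> B'" using fy(3)[OF assms(2)] by blast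
  have "lse M (\<lambda>x. - c (x, y) - u x) \<le> lse M (\<lambda>x. - c (x, y) - u' x) + e"
    apply (rule p.lse_le[OF fy(2)[OF assms(1)] _ fy(2)[OF assms(2)]])
    using B apply blast using B' apply blast
    subgoal for x using assms(3)[of x] by arith done
  moreover have "lse M (\<lambda>x. - c (x, y) - u' x) \<le> lse M (\<lambda>x. - c (x, y) - u x) + e"
    apply (rule p.lse_le[OF fy(2)[OF assms(2)] _ fy(2)[OF assms(1)]])
    using B' apply blast using B apply blast
    subgoal for x using assms(3)[of x] by arith done
  ultimately show ?thesis unfolding v_eq by simp
qed

lemma T_cont:
  assumes u: "continuous_on UNIV u"
  shows "continuous_on UNIV (v_of c M u)"
proof -
  have "(v_of c M u \<longlongrightarrow> v_of c M u y0) (nhds y0)" for y0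
  proof (rule tendstoI)
    fix e :: real assume e: "e > 0"
    define W where "W = {p :: 'b \<times> 'a. \<bar>c (snd p, fst p) - c (snd p, y0)\<bar> < e / 2}"
    have cw: "continuous_on UNIV (\<lambda>p :: 'b \<times> 'a. \<bar>c (snd p, fst p) - c (snd p, y0)\<bar>)"
      by (intro continuous_intros continuous_on_compose2[OF cc]) (auto intro!: continuous_intros)
    have "open W" unfolding W_def
      by (rule open_Collect_less[OF cw]) (auto intro: continuous_intros)
    moreover have "{y0} \<times> UNIV \<subseteq> W" unfolding W_def using e by auto
    ultimately obtain V where V: "y0 \<in> V" "open V" "V \<times> UNIV \<subseteq> W"
      using Elementary_Topology.tube_lemma[OF cA] by metis
    have "\<forall>y\<in>V. dist (v_of c M u y) (v_of c M u y0) < e"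
    proof
      fix y assume y: "y \<in> V"
      have cl: "\<bar>c (x, y) - c (x, y0)\<bar> < e / 2" for x
        using subsetD[OF V(3), of "(y, x)"] y unfolding W_def by auto
      obtain B where B: "\<forall>x. \<bar>- c (x, y) - u x\<bar> \<le> B" using fy(3)[OF u] by blast
      obtain B' where B': "\<forall>x. \<bar>- c (x, y0) - u x\<bar> \<le> B'" using fy(3)[OF u] by blast
      have "lse M (\<lambda>x. - c (x, y) - u x) \<le> lse M (\<lambda>x. - c (x, y0) - u x) + e / 2"
        apply (rule p.lse_le[OF fy(2)[OF u] _ fy(2)[OF u]])
        using B apply blast using B' apply blast
        subgoal for x using cl[of x] by arith done
      moreover have "lse M (\<lambda>x. - c (x, y0) - u x) \<le> lse M (\<lambda>x. - c (x, y) - u x) + e / 2"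
        apply (rule p.lse_le[OF fy(2)[OF u] _ fy(2)[OF u]])
        using B' apply blast using B apply blast
        subgoal for x using cl[of x] by arith done
      ultimately show "dist (v_of c M u y) (v_of c M u y0) < e"
        unfolding v_eq dist_real_def using e by simp
    qed
    thus "\<forall>\<^sub>F y in nhds y0. dist (v_of c M u y) (v_of c M u y0) < e"
      unfolding eventually_nhds using V by blast
  qed
  thus ?thesis unfolding continuous_on_def
    using tendsto_mono[OF at_within_le_nhds] by blast
qed

lemma T_contr:
  "\<exists>l. 0 \<le> l \<and> l < 1 \<and> (\<forall>u u' r y y'. continuous_on UNIV u \<longrightarrow> continuous_on UNIV u' \<longrightarrow>
     (\<forall>x x'. (u x - u' x) - (u x' - u' x') \<le> r) \<longrightarrow>
     (v_of c M u y - v_of c M u' y) - (v_of c M u y' - v_of c M u' y') \<le> l * r)"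
proof -
  obtain Cc where Cc: "Cc \<ge> 0" "\<And>p. \<bar>c p\<bar> \<le> Cc" using cbnd by blast
  show ?thesis
  proof (intro exI[of _ "1 - exp (- 2 * (2 * Cc))"] conjI allI impI)
    show "0 \<le> 1 - exp (- 2 * (2 * Cc))" using Cc by simp
    show "1 - exp (- 2 * (2 * Cc)) < 1" by simp
    fix u u' :: "'a \<Rightarrow> real" and r y y'
    assume u: "continuous_on UNIV u" and u': "continuous_on UNIV u'"
      and osc: "\<forall>x x'. (u x - u' x) - (u x' - u' x') \<le> r"
    obtain \<alpha> where al: "\<forall>x. \<alpha> \<le> u x - u' x \<and> u x - u' x \<le> \<alpha> + r"
      using osc_int[of "\<lambda>x. u x - u' x" r] osc by blast
    have wc: "continuous_on UNIV (\<lambda>x. u x - u' x)" using u u' by (intro continuous_intros)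
    obtain Bw where Bw: "\<forall>x. \<bar>u x - u' x\<bar> \<le> Bw" using cont_bnd[OF cA wc] by blast
    have mw: "(\<lambda>x. u x - u' x) \<in> borel_measurable M"
      unfolding measurable_cong_sets[OF SM refl] by (rule borel_measurable_continuous_onI[OF wc])
    obtain B1 where B1: "\<forall>x. \<bar>- c (x, y) - u' x\<bar> \<le> B1" using fy(3)[OF u'] by blast
    obtain B2 where B2: "\<forall>x. \<bar>- c (x, y') - u' x\<bar> \<le> B2" using fy(3)[OF u'] by blast
    have D: "\<bar>(- c (x, y) - u' x) - (- c (x, y') - u' x)\<bar> \<le> 2 * Cc" for x
      using Cc(2)[of "(x,y)"] Cc(2)[of "(x,y')"] by arith
    have e1: "(\<lambda>x. (- c (x, y) - u' x) - (u x - u' x)) = (\<lambda>x. - c (x, y) - u x)" by auto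
    have e2: "(\<lambda>x. (- c (x, y') - u' x) - (u x - u' x)) = (\<lambda>x. - c (x, y') - u x)" by auto
    have "(lse M (\<lambda>x. (- c (x, y) - u' x) - (u x - u' x)) - lse M (\<lambda>x. - c (x, y) - u' x))
       - (lse M (\<lambda>x. (- c (x, y') - u' x) - (u x - u' x)) - lse M (\<lambda>x. - c (x, y') - u' x))
       \<le> (1 - exp (- 2 * (2 * Cc))) * r"
      by (rule p.contr[OF fy(2)[OF u'] _ fy(2)[OF u'] _ mw _ D]) (use B1 B2 Bw al in auto)
    thus "(v_of c M u y - v_of c M u' y) - (v_of c M u y' - v_of c M u' y')
          \<le> (1 - exp (- 2 * (2 * Cc))) * r"
      unfolding v_eq e1 e2 by simp
  qed
qed

end

lemma prod_meas:
  fixes c :: "'a::topological_space \<times> 'b::topological_space \<Rightarrow> real"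
  assumes cA: "compact (UNIV::'a set)" and cB: "compact (UNIV::'b set)" and cc: "continuous_on UNIV c"
  shows "c \<in> borel_measurable (borel \<Otimes>\<^sub>M borel)"
proof -
  have cU: "compact (UNIV :: ('a\<times>'b) set)" using compact_Times[OF cA cB] by simp
  let ?F = "\<lambda>t. {A \<times> B | A B. open A \<and> open B \<and> A \<times> B \<subseteq> {p. c p < t}}"
  have key: "{p. c p < t} \<in> sets (borel \<Otimes>\<^sub>M borel)" for t
  proof -
    have ex: "\<forall>n. \<exists>G. G \<subseteq> ?F t \<and> finite G \<and> {p. c p \<le> t - 1 / Suc n} \<subseteq> \<Union>G"
    proof
      fix n
      have comp: "compact {p. c p \<le> t - 1 / Suc n}"
        using compact_Int_closed[OF cU closed_Collect_le[OF cc continuous_on_const]] by simp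
      have op: "open {p. c p < t}" by (rule open_Collect_less[OF cc continuous_on_const])
      have "{p. c p \<le> t - 1 / Suc n} \<subseteq> \<Union>(?F t)"
      proof
        fix p assume "p \<in> {p. c p \<le> t - 1 / Suc n}"
        hence h: "c p \<le> t - 1 / real (Suc n)" by simp
        have "0 < 1 / real (Suc n)" by simp
        hence "c p < t" using h by linarith
        hence "p \<in> {p. c p < t}" by simp
        then obtain A B where "open A" "open B" "p \<in> A \<times> B" "A \<times> B \<subseteq> {p. c p < t}"
          using open_prod_elim[OF op] by blast
        thus "p \<in> \<Union>(?F t)" by blast
      qed
      moreover have "\<And>B. B \<in> ?F t \<Longrightarrow> open B" by (auto intro: open_Times)
      ultimately obtain G where "G \<subseteq> ?F t" "finite G" "{p. c p \<le> t - 1 / Suc n} \<subseteq> \<Union>G"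
        by (rule compactE[OF comp])
      thus "\<exists>G. G \<subseteq> ?F t \<and> finite G \<and> {p. c p \<le> t - 1 / Suc n} \<subseteq> \<Union>G" by blast
    qed
    obtain G where G0: "\<forall>n. G n \<subseteq> ?F t \<and> finite (G n) \<and> {p. c p \<le> t - 1 / Suc n} \<subseteq> \<Union>(G n)"
      using choice[OF ex] by blast
    have G: "\<And>n. G n \<subseteq> ?F t" "\<And>n. finite (G n)"
      "\<And>n. {p. c p \<le> t - 1 / Suc n} \<subseteq> \<Union>(G n)" using G0 by auto
    have eq: "{p. c p < t} = (\<Union>n. \<Union>(G n))"
    proof
      show "{p. c p < t} \<subseteq> (\<Union>n. \<Union>(G n))"
      proof
        fix p assume "p \<in> {p. c p < t}"
        then obtain n where "inverse (real (Suc n)) < t - c p" using reals_Archimedean[of "t - c p"] by auto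
        hence "p \<in> {p. c p \<le> t - 1 / Suc n}" by (simp add: inverse_eq_divide)
        thus "p \<in> (\<Union>n. \<Union>(G n))" using G(3) by blast
      qed
      show "(\<Union>n. \<Union>(G n)) \<subseteq> {p. c p < t}" using G(1) by blast
    qed
    have "\<Union>(G n) \<in> sets (borel \<Otimes>\<^sub>M borel)" for n
    proof (rule sets.finite_Union[OF G(2)])
      show "G n \<subseteq> sets (borel \<Otimes>\<^sub>M borel)"
      proof
        fix X assume "X \<in> G n"
        then obtain A B where "X = A \<times> B" "open A" "open B" using G(1) by blast
        thus "X \<in> sets (borel \<Otimes>\<^sub>M borel)" by (auto intro!: pair_measureI borel_open)
      qed
    qed
    thus ?thesis unfolding eq by (intro sets.countable_nat_UN) auto
  qed
  show ?thesis unfolding borel_measurable_iff_less using key by (simp add: space_pair_measure)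
qed

lemma uv: "u_of c \<nu> v = v_of (\<lambda>(y, x). c (x, y)) \<nu> v"
  unfolding u_of_def v_of_def by simp

lemma fub:
  fixes \<mu> :: "'a::topological_space measure" and \<nu> :: "'b::topological_space measure"
    and c :: "'a \<times> 'b \<Rightarrow> real" and u :: "'a \<Rightarrow> real"
  assumes cA: "compact (UNIV :: 'a set)" and cB: "compact (UNIV :: 'b set)"
    and Pm: "prob_space \<mu>" and Sm: "sets \<mu> = sets borel"
    and Pn: "prob_space \<nu>" and Sn: "sets \<nu> = sets borel"
    and cc: "continuous_on UNIV c"
    and u: "continuous_on UNIV u"
  shows "(\<integral>x. exp (sinkhorn_S c \<mu> \<nu> u x - u x) \<partial>\<mu>) = 1"
proof -
  interpret pm: prob_space \<mu> by fact
  interpret pn: prob_space \<nu> by fact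
  interpret pp: pair_prob_space \<mu> \<nu> ..
  interpret s1: sk c \<mu> by unfold_locales (rule assms)+
  define c' where "c' = (\<lambda>(y, x). c (x, y))"
  have c'eq: "c' = (\<lambda>p. c (snd p, fst p))" unfolding c'_def by (auto simp: case_prod_beta)
  have cc': "continuous_on UNIV c'" unfolding c'eq
    by (rule continuous_on_compose2[OF cc]) (auto intro!: continuous_intros)
  interpret s2: sk c' \<nu> by unfold_locales (rule assms cc')+
  define v where "v = v_of c \<mu> u"
  have v: "continuous_on UNIV v" unfolding v_def by (rule s1.T_cont[OF u])
  have S: "sinkhorn_S c \<mu> \<nu> u = v_of c' \<nu> v" unfolding sinkhorn_S_def v_def c'_def uv ..
  have c'e: "c' (y, x) = c (x, y)" for x y unfolding c'_def by simp
  obtain Cc where Cc: "\<And>p. \<bar>c p\<bar> \<le> Cc" using s1.cbnd by blast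
  obtain Bu where Bu: "\<And>x. \<bar>u x\<bar> \<le> Bu" using cont_bnd[OF cA u] by blast
  obtain Bv where Bv: "\<And>x. \<bar>v x\<bar> \<le> Bv" using cont_bnd[OF cB v] by blast
  have mc: "c \<in> borel_measurable (\<mu> \<Otimes>\<^sub>M \<nu>)"
    unfolding measurable_cong_sets[OF sets_pair_measure_cong[OF Sm Sn] refl]
    by (rule prod_meas[OF cA cB cc])
  have mu: "u \<in> borel_measurable \<mu>"
    unfolding measurable_cong_sets[OF Sm refl] by (rule borel_measurable_continuous_onI[OF u])
  have mv: "v \<in> borel_measurable \<nu>"
    unfolding measurable_cong_sets[OF Sn refl] by (rule borel_measurable_continuous_onI[OF v])
  have mu': "(\<lambda>p. u (fst p)) \<in> borel_measurable (\<mu> \<Otimes>\<^sub>M \<nu>)"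
    by (rule measurable_compose[OF measurable_fst mu])
  have mv': "(\<lambda>p. v (snd p)) \<in> borel_measurable (\<mu> \<Otimes>\<^sub>M \<nu>)"
    by (rule measurable_compose[OF measurable_snd mv])
  have mf: "(\<lambda>p. - c p - v (snd p) - u (fst p)) \<in> borel_measurable (\<mu> \<Otimes>\<^sub>M \<nu>)"
    using mc mu' mv' by measurable
  have bf: "\<bar>- c p - v (snd p) - u (fst p)\<bar> \<le> Cc + Bv + Bu" for p
    using Cc[of p] Bv[of "snd p"] Bu[of "fst p"] by arith
  have int: "integrable (\<mu> \<Otimes>\<^sub>M \<nu>) (\<lambda>p. exp (- c p - v (snd p) - u (fst p)))"
    by (rule pp.L_int[OF mf bf])
  have ieq: "case_prod (\<lambda>x y. exp (- c (x, y) - v y - u x)) = (\<lambda>p. exp (- c p - v (snd p) - u (fst p)))"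
    by (rule ext) (simp add: case_prod_beta)
  have int': "integrable (\<mu> \<Otimes>\<^sub>M \<nu>) (case_prod (\<lambda>x y. exp (- c (x, y) - v y - u x)))"
    unfolding ieq by (rule int)
  have F: "(\<integral>y. (\<integral>x. exp (- c (x, y) - v y - u x) \<partial>\<mu>) \<partial>\<nu>)
         = (\<integral>x. (\<integral>y. exp (- c (x, y) - v y - u x) \<partial>\<nu>) \<partial>\<mu>)"
    by (rule pp.Fubini_integral[OF int'])
  have L: "(\<integral>x. exp (- c (x, y) - v y - u x) \<partial>\<mu>) = 1" for y
  proof -
    have e: "exp (- c (x, y) - v y - u x) = exp (- v y) * exp (- c (x, y) - u x)" for x
      by (simp flip: exp_add add: algebra_simps)
    obtain B where B: "\<forall>x. \<bar>- c (x, y) - u x\<bar> \<le> B" using s1.fy(3)[OF u] by blast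
    have pos: "(\<integral>x. exp (- c (x, y) - u x) \<partial>\<mu>) > 0"
      using pm.L_pos[OF s1.fy(2)[OF u], of y B] B by (meson exp_gt_zero order_less_le_trans)
    have "v y = ln (\<integral>x. exp (- c (x, y) - u x) \<partial>\<mu>)" unfolding v_def v_of_def by simp
    hence ev: "exp (v y) = (\<integral>x. exp (- c (x, y) - u x) \<partial>\<mu>)" using pos by simp
    have "(\<integral>x. exp (- c (x, y) - v y - u x) \<partial>\<mu>) = (\<integral>x. exp (- v y) * exp (- c (x, y) - u x) \<partial>\<mu>)"
      by (simp only: e)
    also have "\<dots> = exp (- v y) * (\<integral>x. exp (- c (x, y) - u x) \<partial>\<mu>)"
      by (rule integral_mult_right_zero)
    also have "\<dots> = exp (- v y) * exp (v y)" by (simp only: ev)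
    also have "\<dots> = 1" by (simp flip: exp_add)
    finally show ?thesis .
  qed
  have R: "(\<integral>y. exp (- c (x, y) - v y - u x) \<partial>\<nu>) = exp (sinkhorn_S c \<mu> \<nu> u x - u x)" for x
  proof -
    have e: "exp (- c (x, y) - v y - u x) = exp (- u x) * exp (- c' (y, x) - v y)" for y
      unfolding c'e by (simp flip: exp_add add: algebra_simps)
    obtain B where B: "\<forall>y. \<bar>- c' (y, x) - v y\<bar> \<le> B" using s2.fy(3)[OF v] by blast
    have pos: "(\<integral>y. exp (- c' (y, x) - v y) \<partial>\<nu>) > 0"
      using pn.L_pos[OF s2.fy(2)[OF v], of x B] B by (meson exp_gt_zero order_less_le_trans)
    have "sinkhorn_S c \<mu> \<nu> u x = ln (\<integral>y. exp (- c' (y, x) - v y) \<partial>\<nu>)"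
      unfolding S v_of_def by simp
    hence es: "exp (sinkhorn_S c \<mu> \<nu> u x) = (\<integral>y. exp (- c' (y, x) - v y) \<partial>\<nu>)" using pos by simp
    have "(\<integral>y. exp (- c (x, y) - v y - u x) \<partial>\<nu>) = (\<integral>y. exp (- u x) * exp (- c' (y, x) - v y) \<partial>\<nu>)"
      by (simp only: e)
    also have "\<dots> = exp (- u x) * (\<integral>y. exp (- c' (y, x) - v y) \<partial>\<nu>)"
      by (rule integral_mult_right_zero)
    also have "\<dots> = exp (- u x) * exp (sinkhorn_S c \<mu> \<nu> u x)" by (simp only: es)
    also have "\<dots> = exp (sinkhorn_S c \<mu> \<nu> u x - u x)" by (simp flip: exp_add)
    finally show ?thesis .
  qed
  have "(\<integral>x. exp (sinkhorn_S c \<mu> \<nu> u x - u x) \<partial>\<mu>) = (\<integral>y. 1 \<partial>\<nu>)"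
    using F unfolding L R by simp
  thus ?thesis by (simp add: pn.prob_space)
qed


lemma (in prob_space) mean_bound:
  fixes f :: "'a \<Rightarrow> real"
  assumes m: "f \<in> borel_measurable M" and b: "\<And>x. \<bar>f x\<bar> \<le> B"
    and one: "(\<integral>x. exp (f x) \<partial>M) = 1" and osc: "\<And>x x'. f x - f x' \<le> r"
  shows "\<bar>f x\<bar> \<le> r"
proof -
  have I: "integrable M (\<lambda>x. exp (f x))" by (rule L_int[OF m b])
  have "(\<integral>x'. exp (f x - r) \<partial>M) \<le> (\<integral>x'. exp (f x') \<partial>M)"
    apply (rule integral_mono[OF _ I]) apply simp
    subgoal for x' using osc[of x x'] by simp done
  hence "exp (f x - r) \<le> 1" using one by (simp add: prob_space)
  hence 1: "f x - r \<le> 0" by simp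
  have "(\<integral>x'. exp (f x') \<partial>M) \<le> (\<integral>x'. exp (f x + r) \<partial>M)"
    apply (rule integral_mono[OF I]) apply simp
    subgoal for x' using osc[of x' x] by simp done
  hence "1 \<le> exp (f x + r)" using one by (simp add: prob_space)
  hence 2: "0 \<le> f x + r" by simp
  show ?thesis using 1 2 by arith
qed

theorem theorem2p8:
  fixes \<mu> :: "'a::topological_space measure" and \<nu> :: "'b::topological_space measure"
    and c :: "'a \<times> 'b \<Rightarrow> real" and u0 :: "'a \<Rightarrow> real"
  assumes "compact (UNIV :: 'a set)" and "compact (UNIV :: 'b set)"
    and "prob_space \<mu>" and "sets \<mu> = sets borel"
    and "prob_space \<nu>" and "sets \<nu> = sets borel"
    and "continuous_on UNIV c"
    and "continuous_on UNIV u0"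
  shows "\<exists>u_inf. continuous_on UNIV u_inf \<and> sinkhorn_S c \<mu> \<nu> u_inf = u_inf \<and>
           uniform_limit UNIV (\<lambda>m. (sinkhorn_S c \<mu> \<nu> ^^ m) u0) u_inf sequentially"
proof -
  note cA = assms(1) and cB = assms(2) and Pm = assms(3) and Sm = assms(4)
    and Pn = assms(5) and Sn = assms(6) and cc = assms(7) and u0 = assms(8)
  interpret pm: prob_space \<mu> by fact
  interpret pn: prob_space \<nu> by fact
  interpret s1: sk c \<mu> by unfold_locales (rule assms)+
  define c' where "c' = (\<lambda>(y, x). c (x, y))"
  have c'eq: "c' = (\<lambda>p. c (snd p, fst p))" unfolding c'_def by (auto simp: case_prod_beta)
  have cc': "continuous_on UNIV c'" unfolding c'eq
    by (rule continuous_on_compose2[OF cc]) (auto intro!: continuous_intros)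
  interpret s2: sk c' \<nu> by unfold_locales (rule assms cc')+
  define S where "S = sinkhorn_S c \<mu> \<nu>"
  have Seq: "S u = v_of c' \<nu> (v_of c \<mu> u)" for u unfolding S_def sinkhorn_S_def c'_def uv ..
  have Sc: "continuous_on UNIV (S u)" if "continuous_on UNIV u" for u
    unfolding Seq by (intro s2.T_cont s1.T_cont that)
  have Sne: "\<bar>S u x - S u' x\<bar> \<le> e"
    if "continuous_on UNIV u" "continuous_on UNIV u'" "\<And>x. \<bar>u x - u' x\<bar> \<le> e" for u u' e x
    unfolding Seq
    by (intro s2.T_nonexp s1.T_cont that s1.T_nonexp)
  obtain l1 where l1: "0 \<le> l1" "l1 < 1" and l1c: "\<And>u u' r y y'. continuous_on UNIV u \<Longrightarrow> continuous_on UNIV u' \<Longrightarrow>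
     (\<forall>x x'. (u x - u' x) - (u x' - u' x') \<le> r) \<Longrightarrow>
     (v_of c \<mu> u y - v_of c \<mu> u' y) - (v_of c \<mu> u y' - v_of c \<mu> u' y') \<le> l1 * r"
    using s1.T_contr by blast
  obtain l2 where l2: "0 \<le> l2" "l2 < 1" and l2c: "\<And>u u' r y y'. continuous_on UNIV u \<Longrightarrow> continuous_on UNIV u' \<Longrightarrow>
     (\<forall>x x'. (u x - u' x) - (u x' - u' x') \<le> r) \<Longrightarrow>
     (v_of c' \<nu> u y - v_of c' \<nu> u' y) - (v_of c' \<nu> u y' - v_of c' \<nu> u' y') \<le> l2 * r"
    using s2.T_contr by blast
  define q where "q = l2 * l1"
  have q0: "0 \<le> q" unfolding q_def using l1 l2 by simp
  have "l2 * l1 \<le> 1 * l1" by (rule mult_right_mono) (use l1 l2 in auto)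
  hence q1: "q < 1" unfolding q_def using l1 by simp
  have Scontr: "(S u x - S u' x) - (S u x' - S u' x') \<le> q * r"
    if u: "continuous_on UNIV u" and u': "continuous_on UNIV u'"
      and o: "\<forall>x x'. (u x - u' x) - (u x' - u' x') \<le> r" for u u' r x x'
  proof -
    have "\<forall>y y'. (v_of c \<mu> u y - v_of c \<mu> u' y) - (v_of c \<mu> u y' - v_of c \<mu> u' y') \<le> l1 * r"
      using l1c[OF u u' o] by blast
    from l2c[OF s1.T_cont[OF u] s1.T_cont[OF u'] this]
    show ?thesis unfolding Seq q_def by (simp add: mult.assoc)
  qed
  define U where "U m = (S ^^ m) u0" for m
  have Ucont: "continuous_on UNIV (U m)" for m
    by (induction m) (auto simp: U_def u0 intro: Sc)
  have USuc: "U (Suc m) = S (U m)" for m unfolding U_def by simp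
  define d where "d m x = U (Suc m) x - U m x" for m x
  have dc: "continuous_on UNIV (d m)" for m
    unfolding d_def using Ucont by (intro continuous_intros)
  obtain B0 where B0: "\<And>x. \<bar>d 0 x\<bar> \<le> B0" using cont_bnd[OF cA dc[of 0]] by blast
  define R0 where "R0 = 2 * B0"
  have osc: "\<forall>x x'. d m x - d m x' \<le> q ^ m * R0" for m
  proof (induction m)
    case 0
    show ?case unfolding R0_def using B0 by (auto simp: abs_le_iff) (smt (verit) B0)
  next
    case (Suc m)
    have "\<forall>x x'. (U (Suc m) x - U m x) - (U (Suc m) x' - U m x') \<le> q ^ m * R0"
      using Suc unfolding d_def .
    from Scontr[OF Ucont Ucont this]
    show ?case unfolding d_def USuc by (simp add: mult.assoc)
  qed
  have dbound: "\<bar>d m x\<bar> \<le> q ^ m * R0" for m x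
  proof -
    have md: "d m \<in> borel_measurable \<mu>"
      unfolding measurable_cong_sets[OF Sm refl] by (rule borel_measurable_continuous_onI[OF dc])
    obtain B where B: "\<And>x. \<bar>d m x\<bar> \<le> B" using cont_bnd[OF cA dc[of m]] by blast
    have one: "(\<integral>x. exp (d m x) \<partial>\<mu>) = 1"
      unfolding d_def USuc S_def by (rule fub[OF cA cB Pm Sm Pn Sn cc Ucont])
    show ?thesis by (rule pm.mean_bound[OF md B one]) (use osc in blast)
  qed
  have summ: "summable (\<lambda>n. q ^ n * R0)"
    by (rule summable_mult2) (rule summable_geometric, use q0 q1 in simp)
  have W: "uniform_limit UNIV (\<lambda>n x. \<Sum>i<n. d i x) (\<lambda>x. \<Sum>i. d i x) sequentially"
    by (rule Weierstrass_m_test[OF _ summ]) (use dbound in simp)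
  define u_inf where "u_inf x = u0 x + (\<Sum>i. d i x)" for x
  have Ueq: "U n x = u0 x + (\<Sum>i<n. d i x)" for n x
    unfolding d_def using sum_lessThan_telescope[of "\<lambda>n. U n x" n] by (simp add: U_def)
  have UL: "uniform_limit UNIV U u_inf sequentially"
  proof -
    have "uniform_limit UNIV (\<lambda>n x. u0 x + (\<Sum>i<n. d i x)) (\<lambda>x. u0 x + (\<Sum>i. d i x)) sequentially"
      by (intro uniform_limit_add uniform_limit_const W)
    thus ?thesis unfolding u_inf_def Ueq[abs_def] .
  qed
  have uc: "continuous_on UNIV u_inf"
    by (rule uniform_limit_theorem[OF _ UL]) (auto intro: always_eventually Ucont)
  have fixpt: "S u_inf x = u_inf x" for x
  proof -
    have l1: "(\<lambda>n. U (Suc n) x) \<longlonglongrightarrow> u_inf x"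
      using LIMSEQ_Suc[OF tendsto_uniform_limitI[OF UL, of x]] by simp
    have l2: "(\<lambda>n. U (Suc n) x) \<longlonglongrightarrow> S u_inf x"
    proof (rule tendstoI)
      fix e :: real assume e: "e > 0"
      have "\<forall>\<^sub>F n in sequentially. \<forall>x\<in>UNIV. dist (U n x) (u_inf x) < e / 2"
        using uniform_limitD[OF UL, of "e / 2"] e by simp
      thus "\<forall>\<^sub>F n in sequentially. dist (U (Suc n) x) (S u_inf x) < e"
      proof eventually_elim
        case (elim n)
        have "\<bar>S (U n) x - S u_inf x\<bar> \<le> e / 2"
          apply (rule Sne[OF Ucont uc])
          subgoal for x' using elim[rule_format, of x'] by (simp add: dist_real_def)
          done
        thus ?case unfolding USuc dist_real_def using e by simp
      qed
    qed
    show ?thesis using LIMSEQ_unique[OF l2 l1] .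
  qed
  show ?thesis
  proof (intro exI conjI)
    show "continuous_on UNIV u_inf" by (rule uc)
    show "sinkhorn_S c \<mu> \<nu> u_inf = u_inf" using fixpt unfolding S_def by auto
    show "uniform_limit UNIV (\<lambda>m. (sinkhorn_S c \<mu> \<nu> ^^ m) u0) u_inf sequentially"
      using UL unfolding U_def S_def .
  qed
qed

end
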